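(* Assume (A1)–(A2) and $N\geq \max\{1,\|f\|_\infty/2\}$. Then the semi-discrete policy iteration process described in the context is well-defined, that is, there are Lipschitz continuous functions $v_n^h,\alpha_n$ satisfying its equations for all $n\ge0$, and the functions $v_n^h$ are uniformly bounded for all $n\geq 0$ and $h>0$.
   Context: Let $d,m\ge1$, $T\ge 1$, $A\subset\mathbb{R}^m$ compact, $c:[0,T]\times\mathbb{R}^d\times A\to\mathbb{R}$, $f:[0,T]\times\mathbb{R}^d\times A\to\mathbb{R}^d$, $q:\mathbb{R}^d\to\mathbb{R}$. Let $\alpha(t,x,p)=\operatorname{argmin}_{a\in A}[c(t,x,a)+p\cdot f(t,x,a)]$, assumed to be the unique minimizer. Assumptions: (A1) $c,f,q$ are uniformly bounded and Lipschitz continuous in all their variables; (A2) $\alpha(\cdot,\cdot,\cdot)$ and a given continuous initial policy $\alpha_0:\mathbb{R}\times\mathbb{R}^d\to A$ are uniformly Lipschitz continuous in all their variables. $\|f\|_\infty=\sup|f|$. For $\varphi:\mathbb{R}^d\to\mathbb{R}$, $h\in(0,1)$: $\nabla^h\varphi(x)=\big(\frac{\varphi(x+he_i)-\varphi(x-he_i)}{2h}\big)_{i=1}^d$, $\Delta^h\varphi(x)=\sum_{i=1}^d\frac{\varphi(x+he_i)-2\varphi(x)+\varphi(x-he_i)}{h^2}$ (acting in $x$). Semi-discrete policy iteration: for $n=0,1,\dots$, $v_n^h$ solves $\partial_t v_n^h+c(t,x,\alpha_n(t,x))+\nabla^h v_n^h\cdot f(t,x,\alpha_n(t,x))=-Nh\Delta^h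 v_n^h$ in $(0,T)\times\mathbb{R}^d$, $v_n^h(T,x)=q(x)$ on $\mathbb{R}^d$, and then $\alpha_{n+1}(t,x)=\alpha(t,x,\nabla^h v_n^h(t,x))$ in $(0,T)\times\mathbb{R}^d$. *)

theory Defs
  imports "HOL-Analysis.Analysis"
begin

definition grad_h :: "real \<Rightarrow> (real^'d \<Rightarrow> real) \<Rightarrow> real^'d \<Rightarrow> real^'d" where
  "grad_h h \<phi> x = (\<chi> i. (\<phi> (x + h *\<^sub>R axis i 1) - \<phi> (x - h *\<^sub>R axis i 1)) / (2 * h))"

definition lap_h :: "real \<Rightarrow> (real^'d \<Rightarrow> real) \<Rightarrow> real^'d \<Rightarrow> real" where
  "lap_h h \<phi> x = (\<Sum>i\<in>UNIV. (\<phi> (x + h *\<^sub>R axis i 1) - 2 * \<phi> x + \<phi> (x - h *\<^sub>R axis i 1)) / h\<^sup>2)"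

definition sup_norm :: "real \<Rightarrow> 'm set \<Rightarrow> (real \<Rightarrow> real^'d \<Rightarrow> 'm \<Rightarrow> real^'d) \<Rightarrow> real" where
  "sup_norm T A f = (SUP z \<in> {0..T} \<times> (UNIV::(real^'d) set) \<times> A. norm (f (fst z) (fst (snd z)) (snd (snd z))))"

end

theory Submission
  imports Defs
begin


lemma cmp_deriv:
  fixes F R F' R' :: "real \<Rightarrow> real" and a b :: real
  assumes ab: "a \<le> b"
    and dF: "\<And>r. r \<in> {a..b} \<Longrightarrow> (F has_real_derivative F' r) (at r within {a..b})"
    and dR: "\<And>r. r \<in> {a..b} \<Longrightarrow> (R has_real_derivative R' r) (at r within {a..b})"
    and le: "\<And>r. r \<in> {a..b} \<Longrightarrow> \<bar>F' r\<bar> \<le> R' r"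
    and init: "\<bar>F a\<bar> \<le> R a"
  shows "\<bar>F b\<bar> \<le> R b"
proof -
  have cF: "continuous_on {a..b} F"
    using dF by (meson DERIV_continuous continuous_on_eq_continuous_within)
  have cR: "continuous_on {a..b} R"
    using dR by (meson DERIV_continuous continuous_on_eq_continuous_within)
  have at: "at r within {a..b} = at r" if "a < r" "r < b" for r
    using that by (simp add: at_within_Icc_at)
  have 1: "(\<lambda>r. R r - F r) a \<le> (\<lambda>r. R r - F r) b"
  proof (rule DERIV_nonneg_imp_increasing_open[OF ab])
    fix x assume x: "a < x" "x < b"
    have "((\<lambda>r. R r - F r) has_real_derivative R' x - F' x) (at x)"
      using dR[of x] dF[of x] x by (auto simp: at intro!: derivative_intros)
    moreover have "R' x - F' x \<ge> 0" using le[of x] x by auto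
    ultimately show "\<exists>y. ((\<lambda>r. R r - F r) has_real_derivative y) (at x) \<and> 0 \<le> y" by blast
  qed (intro continuous_intros cF cR)
  have 2: "(\<lambda>r. R r + F r) a \<le> (\<lambda>r. R r + F r) b"
  proof (rule DERIV_nonneg_imp_increasing_open[OF ab])
    fix x assume x: "a < x" "x < b"
    have "((\<lambda>r. R r + F r) has_real_derivative R' x + F' x) (at x)"
      using dR[of x] dF[of x] x by (auto simp: at intro!: derivative_intros)
    moreover have "R' x + F' x \<ge> 0" using le[of x] x by auto
    ultimately show "\<exists>y. ((\<lambda>r. R r + F r) has_real_derivative y) (at x) \<and> 0 \<le> y" by blast
  qed (intro continuous_intros cF cR)
  show ?thesis using 1 2 init by auto
qed

lemma exp_terms_zero: "(\<lambda>k. M * (x::real)^k / fact k) \<longlonglongrightarrow> 0"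
proof -
  have "summable (\<lambda>k. x^k /\<^sub>R fact k)" using exp_converges[of x] by (rule sums_summable)
  hence "(\<lambda>k. x^k /\<^sub>R fact k) \<longlonglongrightarrow> 0" by (rule summable_LIMSEQ_zero)
  hence "(\<lambda>k. M * (x^k /\<^sub>R fact k)) \<longlonglongrightarrow> M * 0" by (intro tendsto_intros)
  thus ?thesis by (simp add: divide_inverse ac_simps)
qed

lemma gron_iter:
  fixes phi :: "'z \<Rightarrow> real \<Rightarrow> real"
  assumes bd: "\<And>z s. s \<in> {0..T} \<Longrightarrow> phi z s \<le> M"
    and step: "\<And>k z s. s \<in> {0..T} \<Longrightarrow> (\<And>z' r. r \<in> {0..s} \<Longrightarrow> phi z' r \<le> M * (L * r)^k / fact k)
        \<Longrightarrow> phi z s \<le> M * (L * s)^Suc k / fact (Suc k)"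
    and s: "s \<in> {0..T}"
  shows "phi z s \<le> 0"
proof -
  have all: "\<forall>z s. s \<in> {0..T} \<longrightarrow> phi z s \<le> M * (L * s)^k / fact k" for k
  proof (induction k)
    case 0 then show ?case using bd by simp
  next
    case (Suc k)
    show ?case
    proof (intro allI impI)
      fix z s assume s: "s \<in> {0..T}"
      show "phi z s \<le> M * (L * s)^Suc k / fact (Suc k)"
        by (rule step[OF s]) (use Suc s in auto)
    qed
  qed
  show ?thesis
    by (rule LIMSEQ_le_const[OF exp_terms_zero[of M "L * s"]]) (use all s in auto)
qed



definition Pop :: "real \<Rightarrow> (real \<Rightarrow> 'd::finite \<Rightarrow> real^'d \<Rightarrow> real) \<Rightarrow> (real \<Rightarrow> 'd \<Rightarrow> real^'d \<Rightarrow> real)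
   \<Rightarrow> (real \<Rightarrow> real^'d \<Rightarrow> real) \<Rightarrow> real \<Rightarrow> real^'d \<Rightarrow> real" where
  "Pop h ap am u r x = (\<Sum>i\<in>UNIV. ap r i x * u r (x + h *\<^sub>R axis i 1) + am r i x * u r (x - h *\<^sub>R axis i 1))"

lemma Pop_bound:
  assumes "\<And>i. 0 \<le> ap r i x" "\<And>i. 0 \<le> am r i x" "(\<Sum>i\<in>UNIV. ap r i x + am r i x) = l"
    and "\<And>y. \<bar>u r y\<bar> \<le> b"
  shows "\<bar>Pop h ap am u r x\<bar> \<le> l * b"
proof -
  have "\<bar>Pop h ap am u r x\<bar> \<le> (\<Sum>i\<in>UNIV. \<bar>ap r i x * u r (x + h *\<^sub>R axis i 1) + am r i x * u r (x - h *\<^sub>R axis i 1)\<bar>)"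
    unfolding Pop_def by (rule sum_abs)
  also have "\<dots> \<le> (\<Sum>i\<in>UNIV. ap r i x * b + am r i x * b)"
  proof (rule sum_mono)
    fix i
    have "\<bar>ap r i x * u r (x + h *\<^sub>R axis i 1)\<bar> \<le> ap r i x * b"
      using assms(1)[of i] assms(4) by (simp add: abs_mult mult_left_mono)
    moreover have "\<bar>am r i x * u r (x - h *\<^sub>R axis i 1)\<bar> \<le> am r i x * b"
      using assms(2)[of i] assms(4) by (simp add: abs_mult mult_left_mono)
    ultimately show "\<bar>ap r i x * u r (x + h *\<^sub>R axis i 1) + am r i x * u r (x - h *\<^sub>R axis i 1)\<bar>
        \<le> ap r i x * b + am r i x * b" by linarith
  qed
  also have "\<dots> = (\<Sum>i\<in>UNIV. ap r i x + am r i x) * b"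
    by (simp add: sum_distrib_right distrib_right)
  also have "\<dots> = l * b" using assms(3) by simp
  finally show ?thesis .
qed

lemma Pop_diff:
  fixes ap am :: "real \<Rightarrow> 'd::finite \<Rightarrow> real^'d \<Rightarrow> real"
  assumes "\<And>i. 0 \<le> ap r i y" "\<And>i. 0 \<le> am r i y" "(\<Sum>i\<in>UNIV. ap r i y + am r i y) = l"
    and "\<And>i. \<bar>ap r i x - ap r i y\<bar> \<le> La * d" "\<And>i. \<bar>am r i x - am r i y\<bar> \<le> La * d"
    and "\<And>z. \<bar>u r z\<bar> \<le> bu"
    and "\<And>i. \<bar>u r (x + h *\<^sub>R axis i 1) - u r (y + h *\<^sub>R axis i 1)\<bar> \<le> D"
    and "\<And>i. \<bar>u r (x - h *\<^sub>R axis i 1) - u r (y - h *\<^sub>R axis i 1)\<bar> \<le> D"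
  shows "\<bar>Pop h ap am u r x - Pop h ap am u r y\<bar> \<le> 2 * real CARD('d) * (La * d * bu) + l * D"
proof -
  let ?xp = "\<lambda>i. x + h *\<^sub>R axis i 1" and ?xm = "\<lambda>i. x - h *\<^sub>R axis i 1"
  let ?yp = "\<lambda>i. y + h *\<^sub>R axis i 1" and ?ym = "\<lambda>i. y - h *\<^sub>R axis i 1"
  have eq: "Pop h ap am u r x - Pop h ap am u r y = (\<Sum>i\<in>UNIV.
      (ap r i x - ap r i y) * u r (?xp i) + ap r i y * (u r (?xp i) - u r (?yp i))
    + ((am r i x - am r i y) * u r (?xm i) + am r i y * (u r (?xm i) - u r (?ym i))))"
    unfolding Pop_def sum_subtractf[symmetric] by (rule sum.cong) (auto simp: algebra_simps)
  have bu: "0 \<le> bu" using assms(6)[of x] by linarith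
  have "\<bar>Pop h ap am u r x - Pop h ap am u r y\<bar> \<le> (\<Sum>i\<in>UNIV. 2 * (La * d * bu) + (ap r i y + am r i y) * D)"
    unfolding eq
  proof (rule order_trans[OF sum_abs], rule sum_mono)
    fix i
    have a1: "\<bar>(ap r i x - ap r i y) * u r (?xp i)\<bar> \<le> La * d * bu"
      unfolding abs_mult by (rule mult_mono) (use assms(4)[of i] assms(6)[of "?xp i"] bu in auto)
    have a2: "\<bar>(am r i x - am r i y) * u r (?xm i)\<bar> \<le> La * d * bu"
      unfolding abs_mult by (rule mult_mono) (use assms(5)[of i] assms(6)[of "?xm i"] bu in auto)
    have a3: "\<bar>ap r i y * (u r (?xp i) - u r (?yp i))\<bar> \<le> ap r i y * D"
      using assms(1)[of i] assms(7)[of i] by (simp add: abs_mult mult_left_mono)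
    have a4: "\<bar>am r i y * (u r (?xm i) - u r (?ym i))\<bar> \<le> am r i y * D"
      using assms(2)[of i] assms(8)[of i] by (simp add: abs_mult mult_left_mono)
    show "\<bar>(ap r i x - ap r i y) * u r (?xp i) + ap r i y * (u r (?xp i) - u r (?yp i))
    + ((am r i x - am r i y) * u r (?xm i) + am r i y * (u r (?xm i) - u r (?ym i)))\<bar>
       \<le> 2 * (La * d * bu) + (ap r i y + am r i y) * D"
      using a1 a2 a3 a4 by (simp add: distrib_right)
  qed
  also have "\<dots> = 2 * real CARD('d) * (La * d * bu) + l * D"
    using assms(3) by (simp add: sum.distrib sum_distrib_right[symmetric])
  finally show ?thesis .
qed



primrec pic :: "real \<Rightarrow> real \<Rightarrow> (real^'d::finite \<Rightarrow> real) \<Rightarrow> (real \<Rightarrow> real^'d \<Rightarrow> real)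
   \<Rightarrow> (real \<Rightarrow> 'd \<Rightarrow> real^'d \<Rightarrow> real) \<Rightarrow> (real \<Rightarrow> 'd \<Rightarrow> real^'d \<Rightarrow> real) \<Rightarrow> nat \<Rightarrow> real \<Rightarrow> real^'d \<Rightarrow> real" where
  "pic h l q g ap am 0 = (\<lambda>s x. q x + integral {0..s} (\<lambda>r. exp (l * r) * g r x))"
| "pic h l q g ap am (Suc k) = (\<lambda>s x. integral {0..s} (\<lambda>r. Pop h ap am (pic h l q g ap am k) r x))"

lemma deriv_cont_on:
  assumes "\<And>s. s \<in> S \<Longrightarrow> (f has_real_derivative f' s) (at s within S)"
  shows "continuous_on S f"
  using assms by (meson DERIV_continuous continuous_on_eq_continuous_within)

lemma pow_fact_deriv:
  "((\<lambda>s. B * (L * s)^Suc k / fact (Suc k)) has_real_derivative L * (B * (L * s)^k / fact k)) (at s within S)"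
proof -
  have "((\<lambda>s. B * (L * s)^Suc k / fact (Suc k)) has_real_derivative
      B * (real (Suc k) * (L * s)^k * L) / fact (Suc k)) (at s within S)"
    by (auto intro!: derivative_eq_intros simp del: power_Suc)
  moreover have "B * (real (Suc k) * (L * s)^k * L) / fact (Suc k) = L * (B * (L * s)^k / fact k)"
    by (simp add: fact_Suc field_simps del: of_nat_Suc)
  ultimately show ?thesis by (metis (no_types, lifting))
qed

context
  fixes T h l Q G Lq Lg La :: real
    and q :: "real^'d::finite \<Rightarrow> real" and g :: "real \<Rightarrow> real^'d \<Rightarrow> real"
    and ap am :: "real \<Rightarrow> 'd \<Rightarrow> real^'d \<Rightarrow> real"
  assumes T0: "0 \<le> T" and l0: "0 \<le> l"
    and qb: "\<And>x. \<bar>q x\<bar> \<le> Q" and ql: "\<And>x y. \<bar>q x - q y\<bar> \<le> Lq * dist x y" and Lq0: "0 \<le> Lq"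
    and gc: "\<And>x. continuous_on {0..T} (\<lambda>r. g r x)"
    and gb: "\<And>r x. r \<in> {0..T} \<Longrightarrow> \<bar>g r x\<bar> \<le> G"
    and gl: "\<And>r x y. r \<in> {0..T} \<Longrightarrow> \<bar>g r x - g r y\<bar> \<le> Lg * dist x y" and Lg0: "0 \<le> Lg"
    and apc: "\<And>i x. continuous_on {0..T} (\<lambda>r. ap r i x)"
    and amc: "\<And>i x. continuous_on {0..T} (\<lambda>r. am r i x)"
    and apn: "\<And>r i x. r \<in> {0..T} \<Longrightarrow> 0 \<le> ap r i x"
    and amn: "\<And>r i x. r \<in> {0..T} \<Longrightarrow> 0 \<le> am r i x"
    and sumeq: "\<And>r x. r \<in> {0..T} \<Longrightarrow> (\<Sum>i\<in>UNIV. ap r i x + am r i x) = l"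
    and apl: "\<And>r i x y. r \<in> {0..T} \<Longrightarrow> \<bar>ap r i x - ap r i y\<bar> \<le> La * dist x y"
    and aml: "\<And>r i x y. r \<in> {0..T} \<Longrightarrow> \<bar>am r i x - am r i y\<bar> \<le> La * dist x y"
    and La0: "0 \<le> La"
begin

abbreviation "PP k \<equiv> pic h l q g ap am k"

definition "dP k s x = (case k of 0 \<Rightarrow> exp (l * s) * g s x | Suc j \<Rightarrow> Pop h ap am (PP j) s x)"

definition "B0 = Q + exp (l * T) * G * T"

lemma Q0: "0 \<le> Q" using qb[of 0] by linarith
lemma G0: "0 \<le> G" using gb[of 0 0] T0 by fastforce
lemma B00: "0 \<le> B0" unfolding B0_def using Q0 G0 T0 by simp

lemma pic_props:
  "\<forall>x. (\<forall>s\<in>{0..T}. ((\<lambda>s. PP k s x) has_real_derivative dP k s x) (at s within {0..T}))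
     \<and> (\<forall>s\<in>{0..T}. \<bar>PP k s x\<bar> \<le> B0 * (l * s)^k / fact k)"
proof (induction k)
  case 0
  show ?case
  proof (intro allI conjI ballI)
    fix x s assume s: "s \<in> {0..T}"
    have c: "continuous_on {0..T} (\<lambda>r. exp (l * r) * g r x)"
      by (intro continuous_intros gc)
    have d: "\<And>s. s \<in> {0..T} \<Longrightarrow> ((\<lambda>s. PP 0 s x) has_real_derivative dP 0 s x) (at s within {0..T})"
      unfolding dP_def
      using DERIV_add[OF DERIV_const integral_has_real_derivative[OF c]] by simp
    show "((\<lambda>s. PP 0 s x) has_real_derivative dP 0 s x) (at s within {0..T})" by (rule d[OF s])
    have "\<bar>PP 0 s x\<bar> \<le> Q + exp (l * T) * G * s"
    proof (rule cmp_deriv[where F="\<lambda>s. PP 0 s x" and F'="\<lambda>s. dP 0 s x" and R'="\<lambda>s. exp (l * T) * G"])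
      show "0 \<le> s" using s by simp
      fix r assume r: "r \<in> {0..s}"
      hence rT: "r \<in> {0..T}" using s by auto
      show "((\<lambda>s. PP 0 s x) has_real_derivative dP 0 r x) (at r within {0..s})"
        by (rule DERIV_subset[OF d[OF rT]]) (use s in auto)
      show "((\<lambda>s. Q + exp (l * T) * G * s) has_real_derivative exp (l * T) * G) (at r within {0..s})"
        by (auto intro!: derivative_eq_intros)
      have "exp (l * r) \<le> exp (l * T)" using rT l0 by (simp add: mult_left_mono)
      then show "\<bar>dP 0 r x\<bar> \<le> exp (l * T) * G"
        unfolding dP_def using gb[OF rT, of x] by (simp add: abs_mult mult_mono G0)
    next
      show "\<bar>PP 0 0 x\<bar> \<le> Q + exp (l * T) * G * 0" using qb[of x] by simp
    qed
    also have "\<dots> \<le> B0" unfolding B0_def using s G0 by (simp add: mult_left_mono)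
    finally show "\<bar>PP 0 s x\<bar> \<le> B0 * (l * s)^0 / fact 0" by simp
  qed
next
  case (Suc k)
  have cP: "continuous_on {0..T} (\<lambda>s. PP k s y)" for y
    using Suc.IH by (intro deriv_cont_on) blast
  show ?case
  proof (intro allI conjI ballI)
    fix x s assume s: "s \<in> {0..T}"
    have c: "continuous_on {0..T} (\<lambda>r. Pop h ap am (PP k) r x)"
      unfolding Pop_def by (intro continuous_intros apc amc cP)
    have d: "\<And>s. s \<in> {0..T} \<Longrightarrow> ((\<lambda>s. PP (Suc k) s x) has_real_derivative dP (Suc k) s x) (at s within {0..T})"
      unfolding dP_def using integral_has_real_derivative[OF c] by simp
    show "((\<lambda>s. PP (Suc k) s x) has_real_derivative dP (Suc k) s x) (at s within {0..T})" by (rule d[OF s])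
    show "\<bar>PP (Suc k) s x\<bar> \<le> B0 * (l * s)^Suc k / fact (Suc k)"
    proof (rule cmp_deriv[where F="\<lambda>s. PP (Suc k) s x" and F'="\<lambda>s. dP (Suc k) s x"
          and R'="\<lambda>s. l * (B0 * (l * s)^k / fact k)"])
      show "0 \<le> s" using s by simp
      fix r assume r: "r \<in> {0..s}"
      hence rT: "r \<in> {0..T}" using s by auto
      show "((\<lambda>s. PP (Suc k) s x) has_real_derivative dP (Suc k) r x) (at r within {0..s})"
        by (rule DERIV_subset[OF d[OF rT]]) (use s in auto)
      show "((\<lambda>s. B0 * (l * s)^Suc k / fact (Suc k)) has_real_derivative l * (B0 * (l * r)^k / fact k)) (at r within {0..s})"
        by (rule pow_fact_deriv)
      have "\<bar>Pop h ap am (PP k) r x\<bar> \<le> l * (B0 * (l * r)^k / fact k)"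
        by (rule Pop_bound) (use Suc.IH rT apn amn sumeq in auto)
      then show "\<bar>dP (Suc k) r x\<bar> \<le> l * (B0 * (l * r)^k / fact k)"
        unfolding dP_def by simp
    next
      show "\<bar>PP (Suc k) 0 x\<bar> \<le> B0 * (l * 0)^Suc k / fact (Suc k)" by simp
    qed
  qed
qed

lemma pic_bdT: "s \<in> {0..T} \<Longrightarrow> \<bar>PP k s x\<bar> \<le> B0 * (l * T)^k / fact k"
proof -
  assume s: "s \<in> {0..T}"
  have "\<bar>PP k s x\<bar> \<le> B0 * (l * s)^k / fact k" using pic_props[of k] s by blast
  also have "\<dots> \<le> B0 * (l * T)^k / fact k"
    using s l0 B00 by (intro divide_right_mono mult_left_mono power_mono mult_left_mono) auto
  finally show ?thesis .
qed

lemma expsum: "(\<lambda>k. B * (x::real)^k / fact k) sums (B * exp x)"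
proof -
  have "(\<lambda>k. B * (x^k /\<^sub>R fact k)) sums (B * exp x)" by (rule sums_mult[OF exp_converges])
  thus ?thesis by (simp add: divide_inverse ac_simps)
qed

definition "U s x = (\<Sum>k. PP k s x)"
definition "Mu = B0 * exp (l * T)"

lemma pic_summable: "s \<in> {0..T} \<Longrightarrow> summable (\<lambda>k. PP k s x)"
  by (rule summable_comparison_test'[OF sums_summable[OF expsum[of B0 "l * T"]], of 0])
     (use pic_bdT in auto)

lemma U_bd: "s \<in> {0..T} \<Longrightarrow> \<bar>U s x\<bar> \<le> Mu"
  unfolding U_def Mu_def real_norm_def[symmetric]
  using norm_suminf_le[of "\<lambda>k. PP k s x" "\<lambda>k. B0 * (l * T)^k / fact k"] pic_bdT
    sums_summable[OF expsum[of B0 "l * T"]] sums_unique[OF expsum[of B0 "l * T"]]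
  by (simp del: real_norm_def) (metis real_norm_def)

lemma Mu0: "0 \<le> Mu" unfolding Mu_def using B00 by simp

lemma U0: "U 0 x = q x"
proof -
  have "(\<lambda>k. PP k 0 x) = (\<lambda>k. if k = 0 then q x else 0)"
    by (rule ext) (case_tac k, auto)
  moreover have "(\<lambda>k. if k = 0 then q x else 0) sums q x"
    using sums_single[of 0 "\<lambda>_. q x"] by simp
  ultimately show ?thesis unfolding U_def by (simp add: sums_iff)
qed

lemma U_deriv:
  assumes s: "s \<in> {0..T}"
  shows "((\<lambda>s. U s x) has_real_derivative (exp (l * s) * g s x + Pop h ap am U s x)) (at s within {0..T})"
proof -
  define M where "M k = (case k of 0 \<Rightarrow> exp (l * T) * G | Suc j \<Rightarrow> l * B0 * (l * T)^j / fact j)" for k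
  have sM: "summable M"
    apply (subst summable_Suc_iff[symmetric])
    unfolding M_def using sums_summable[OF expsum[of "l * B0" "l * T"]] by simp
  have bM: "norm (dP k s x) \<le> M k" if s: "s \<in> {0..T}" for k s
  proof (cases k)
    case 0
    have "exp (l * s) \<le> exp (l * T)" using s l0 by (simp add: mult_left_mono)
    then show ?thesis unfolding dP_def M_def 0 using gb[OF s, of x] by (simp add: abs_mult mult_mono G0)
  next
    case (Suc j)
    have "\<bar>Pop h ap am (PP j) s x\<bar> \<le> l * (B0 * (l * T)^j / fact j)"
      by (rule Pop_bound) (use pic_bdT s apn amn sumeq in auto)
    then show ?thesis unfolding dP_def M_def Suc by simp
  qed
  have ul: "uniform_limit {0..T} (\<lambda>n s. \<Sum>i<n. dP i s x) (\<lambda>s. \<Sum>i. dP i s x) sequentially"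
    by (rule Weierstrass_m_test[OF bM sM]) auto
  have dd: "\<And>n s. s \<in> {0..T} \<Longrightarrow> ((\<lambda>s. PP n s x) has_field_derivative dP n s x) (at s within {0..T})"
    using pic_props by blast
  have z: "(0::real) \<in> {0..T}" using T0 by simp
  obtain gg where gg0: "\<forall>s\<in>{0..T}. (\<lambda>n. PP n s x) sums gg s \<and>
      (gg has_field_derivative (\<Sum>i. dP i s x)) (at s within {0..T})"
    using has_field_derivative_series[OF convex_real_interval(5) dd ul z pic_summable[OF z]] by blast
  have gg: "\<And>s. s \<in> {0..T} \<Longrightarrow> (\<lambda>n. PP n s x) sums gg s"
      "\<And>s. s \<in> {0..T} \<Longrightarrow> (gg has_field_derivative (\<Sum>i. dP i s x)) (at s within {0..T})"
    using gg0 by auto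
  have dU: "((\<lambda>s. U s x) has_real_derivative (\<Sum>i. dP i s x)) (at s within {0..T})"
  proof (rule has_field_derivative_transform_within[OF gg(2)[OF s] zero_less_one s])
    fix s' assume "s' \<in> {0..T}"
    then show "gg s' = U s' x" unfolding U_def using gg(1) sums_unique by metis
  qed
  have sdP: "summable (\<lambda>i. dP i s x)"
    by (rule summable_comparison_test'[OF sM, of 0]) (use bM s in auto)
  have "(\<Sum>i. dP i s x) = dP 0 s x + (\<Sum>n. dP (Suc n) s x)"
    using suminf_split_head[OF sdP] by simp
  also have "(\<Sum>n. dP (Suc n) s x) = Pop h ap am U s x"
  proof -
    have sp: "summable (\<lambda>n. PP n s y)" for y using pic_summable[OF s] .
    have "(\<Sum>n. dP (Suc n) s x) = (\<Sum>n. \<Sum>i\<in>UNIV. ap s i x * PP n s (x + h *\<^sub>R axis i 1) + am s i x * PP n s (x - h *\<^sub>R axis i 1))"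
      unfolding dP_def Pop_def by simp
    also have "\<dots> = (\<Sum>i\<in>UNIV. \<Sum>n. ap s i x * PP n s (x + h *\<^sub>R axis i 1) + am s i x * PP n s (x - h *\<^sub>R axis i 1))"
      by (rule suminf_sum) (intro summable_add summable_mult sp)
    also have "\<dots> = Pop h ap am U s x"
      unfolding Pop_def U_def
      by (rule sum.cong[OF refl]) (simp add: suminf_add[symmetric] suminf_mult sp summable_mult)
    finally show ?thesis .
  qed
  finally show ?thesis using dU unfolding dP_def by simp
qed

lemma beta_deriv:
  "((\<lambda>r. exp (l * r) * (A + B * r)) has_real_derivative (exp (l * r) * B + l * (exp (l * r) * (A + B * r)))) (at r within S)"
  by (auto intro!: derivative_eq_intros simp: algebra_simps)

lemma U_bound: "s \<in> {0..T} \<Longrightarrow> \<bar>U s x\<bar> \<le> exp (l * s) * (Q + G * s)"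
proof -
  assume s: "s \<in> {0..T}"
  let ?b = "\<lambda>r. exp (l * r) * (Q + G * r)"
  have "\<bar>U s x\<bar> - ?b s \<le> 0"
  proof (rule gron_iter[where phi="\<lambda>x s. \<bar>U s x\<bar> - ?b s" and M=Mu and L=l and T=T, OF _ _ s])
    fix z s assume s: "s \<in> {0..T}"
    have "0 \<le> ?b s" using Q0 G0 s by simp
    then show "\<bar>U s z\<bar> - ?b s \<le> Mu" using U_bd[OF s, of z] by linarith
  next
    fix k z s assume s: "s \<in> {0..T}"
      and hyp: "\<And>z' r. r \<in> {0..s} \<Longrightarrow> \<bar>U r z'\<bar> - ?b r \<le> Mu * (l * r)^k / fact k"
    have "\<bar>U s z\<bar> \<le> ?b s + Mu * (l * s)^Suc k / fact (Suc k)"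
    proof (rule cmp_deriv[where F="\<lambda>r. U r z" and F'="\<lambda>r. exp (l * r) * g r z + Pop h ap am U r z"
          and R'="\<lambda>r. (exp (l * r) * G + l * ?b r) + l * (Mu * (l * r)^k / fact k)"])
      show "0 \<le> s" using s by simp
      fix r assume r: "r \<in> {0..s}"
      hence rT: "r \<in> {0..T}" using s by auto
      show "((\<lambda>r. U r z) has_real_derivative exp (l * r) * g r z + Pop h ap am U r z) (at r within {0..s})"
        by (rule DERIV_subset[OF U_deriv[OF rT]]) (use s in auto)
      show "((\<lambda>r. ?b r + Mu * (l * r)^Suc k / fact (Suc k)) has_real_derivative
          (exp (l * r) * G + l * ?b r) + l * (Mu * (l * r)^k / fact k)) (at r within {0..s})"
        by (intro DERIV_add beta_deriv pow_fact_deriv)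
      have e: "\<bar>exp (l * r) * g r z\<bar> \<le> exp (l * r) * G"
        using gb[OF rT, of z] by (simp add: abs_mult mult_left_mono)
      have p: "\<bar>Pop h ap am U r z\<bar> \<le> l * (?b r + Mu * (l * r)^k / fact k)"
        by (rule Pop_bound) (use hyp[OF r] rT apn amn sumeq in \<open>auto simp: algebra_simps\<close>)
      show "\<bar>exp (l * r) * g r z + Pop h ap am U r z\<bar> \<le> (exp (l * r) * G + l * ?b r) + l * (Mu * (l * r)^k / fact k)"
        using e p by (simp add: algebra_simps)
    next
      show "\<bar>U 0 z\<bar> \<le> ?b 0 + Mu * (l * 0)^Suc k / fact (Suc k)" using U0 qb by simp
    qed
    then show "\<bar>U s z\<bar> - ?b s \<le> Mu * (l * s)^Suc k / fact (Suc k)" by simp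
  qed
  then show ?thesis by simp
qed

definition "Cb = Q + G * T"
definition "Lx = Lg + 2 * real CARD('d) * La * Cb"

lemma Cb0: "0 \<le> Cb" unfolding Cb_def using Q0 G0 T0 by simp
lemma Lx0: "0 \<le> Lx" unfolding Lx_def using Lg0 La0 Cb0 by simp

lemma U_bound2: "r \<in> {0..T} \<Longrightarrow> \<bar>U r x\<bar> \<le> exp (l * r) * Cb"
proof -
  assume r: "r \<in> {0..T}"
  have "Q + G * r \<le> Cb" unfolding Cb_def using r G0 by (simp add: mult_left_mono)
  then show ?thesis using U_bound[OF r, of x] by (meson exp_ge_zero mult_left_mono order_trans)
qed

lemma U_lip: "s \<in> {0..T} \<Longrightarrow> \<bar>U s x - U s y\<bar> \<le> exp (l * s) * (Lq + Lx * s) * dist x y"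
proof -
  assume s: "s \<in> {0..T}"
  let ?c = "\<lambda>r. exp (l * r) * (Lq + Lx * r)"
  have "(\<lambda>(x,y) s. \<bar>U s x - U s y\<bar> - ?c s * dist x y) (x,y) s \<le> 0"
  proof (rule gron_iter[where phi="\<lambda>(x,y) s. \<bar>U s x - U s y\<bar> - ?c s * dist x y" and M="2 * Mu" and L=l and T=T, OF _ _ s])
    fix z :: "(real^'d) \<times> (real^'d)" and s assume s: "s \<in> {0..T}"
    obtain x y where z: "z = (x, y)" by force
    have "0 \<le> ?c s * dist x y" using Lq0 Lx0 s by simp
    then show "(\<lambda>(x,y) s. \<bar>U s x - U s y\<bar> - ?c s * dist x y) z s \<le> 2 * Mu"
      using U_bd[OF s, of x] U_bd[OF s, of y] z by simp
  next
    fix k and z :: "(real^'d) \<times> (real^'d)" and s assume s: "s \<in> {0..T}"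
      and hyp: "\<And>z' r. r \<in> {0..s} \<Longrightarrow> (\<lambda>(x,y) s. \<bar>U s x - U s y\<bar> - ?c s * dist x y) z' r \<le> 2 * Mu * (l * r)^k / fact k"
    obtain x y where z: "z = (x, y)" by force
    let ?d = "dist x y"
    have hyp2: "\<bar>U r x' - U r y'\<bar> \<le> ?c r * dist x' y' + 2 * Mu * (l * r)^k / fact k" if "r \<in> {0..s}" for r x' y'
      using hyp[OF that, of "(x', y')"] by simp
    have "\<bar>U s x - U s y\<bar> \<le> ?c s * ?d + 2 * Mu * (l * s)^Suc k / fact (Suc k)"
    proof (rule cmp_deriv[where F="\<lambda>r. U r x - U r y"
          and F'="\<lambda>r. (exp (l * r) * g r x + Pop h ap am U r x) - (exp (l * r) * g r y + Pop h ap am U r y)"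
          and R'="\<lambda>r. (exp (l * r) * Lx + l * ?c r) * ?d + l * (2 * Mu * (l * r)^k / fact k)"])
      show "0 \<le> s" using s by simp
      fix r assume r: "r \<in> {0..s}"
      hence rT: "r \<in> {0..T}" using s by auto
      show "((\<lambda>r. U r x - U r y) has_real_derivative (exp (l * r) * g r x + Pop h ap am U r x) - (exp (l * r) * g r y + Pop h ap am U r y)) (at r within {0..s})"
        by (intro DERIV_diff DERIV_subset[OF U_deriv[OF rT]]) (use s in auto)
      show "((\<lambda>r. ?c r * ?d + 2 * Mu * (l * r)^Suc k / fact (Suc k)) has_real_derivative
          (exp (l * r) * Lx + l * ?c r) * ?d + l * (2 * Mu * (l * r)^k / fact k)) (at r within {0..s})"
        by (intro DERIV_add DERIV_cmult_right beta_deriv pow_fact_deriv)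
      have e: "\<bar>exp (l * r) * g r x - exp (l * r) * g r y\<bar> \<le> exp (l * r) * (Lg * ?d)"
        using gl[OF rT, of x y] by (simp add: abs_mult mult_left_mono right_diff_distrib[symmetric])
      have p: "\<bar>Pop h ap am U r x - Pop h ap am U r y\<bar> \<le> 2 * real CARD('d) * (La * ?d * (exp (l * r) * Cb))
          + l * (?c r * ?d + 2 * Mu * (l * r)^k / fact k)"
      proof (rule Pop_diff)
        fix i
        show "\<bar>U r (x + h *\<^sub>R axis i 1) - U r (y + h *\<^sub>R axis i 1)\<bar> \<le> ?c r * ?d + 2 * Mu * (l * r)^k / fact k"
          using hyp2[OF r, of "x + h *\<^sub>R axis i 1" "y + h *\<^sub>R axis i 1"] by simp
        show "\<bar>U r (x - h *\<^sub>R axis i 1) - U r (y - h *\<^sub>R axis i 1)\<bar> \<le> ?c r * ?d + 2 * Mu * (l * r)^k / fact k"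
          using hyp2[OF r, of "x - h *\<^sub>R axis i 1" "y - h *\<^sub>R axis i 1"] by (simp add: dist_norm)
      qed (use rT apn amn sumeq apl aml U_bound2 in auto)
      have "2 * real CARD('d) * (La * ?d * (exp (l * r) * Cb)) + exp (l * r) * (Lg * ?d) = exp (l * r) * Lx * ?d"
        unfolding Lx_def by (simp add: algebra_simps)
      then show "\<bar>(exp (l * r) * g r x + Pop h ap am U r x) - (exp (l * r) * g r y + Pop h ap am U r y)\<bar>
          \<le> (exp (l * r) * Lx + l * ?c r) * ?d + l * (2 * Mu * (l * r)^k / fact k)"
        using e p by (simp add: algebra_simps)
    next
      show "\<bar>U 0 x - U 0 y\<bar> \<le> ?c 0 * ?d + 2 * Mu * (l * 0)^Suc k / fact (Suc k)" using U0 ql by simp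
    qed
    then show "(\<lambda>(x,y) s. \<bar>U s x - U s y\<bar> - ?c s * dist x y) z s \<le> 2 * Mu * (l * s)^Suc k / fact (Suc k)"
      using z by simp
  qed
  then show ?thesis by simp
qed

lemma Pop_scale: "Pop h ap am (\<lambda>r z. c r * u r z) r x = c r * Pop h ap am u r x"
  unfolding Pop_def by (simp add: sum_distrib_left algebra_simps)

definition "W = (\<lambda>s x. exp (-(l * s)) * U s x)"

lemma W0: "W 0 x = q x" unfolding W_def using U0 by simp

lemma W_deriv:
  assumes s: "s \<in> {0..T}"
  shows "((\<lambda>s. W s x) has_real_derivative (g s x + Pop h ap am W s x - l * W s x)) (at s within {0..T})"
proof -
  have dexp: "((\<lambda>s. exp (-(l * s))) has_real_derivative exp (-(l * s)) * (-l)) (at s within {0..T})"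
    by (auto intro!: derivative_eq_intros)
  have d: "((\<lambda>s. exp (-(l * s)) * U s x) has_real_derivative
      (exp (-(l * s)) * (-l)) * U s x + exp (-(l * s)) * (exp (l * s) * g s x + Pop h ap am U s x)) (at s within {0..T})"
    using DERIV_mult'[OF dexp U_deriv[OF s]] by (simp add: algebra_simps)
  have e: "exp (-(l * s)) * exp (l * s) = 1" by (simp add: exp_add[symmetric])
  have popW: "Pop h ap am W s x = exp (-(l * s)) * Pop h ap am U s x"
    unfolding W_def by (rule Pop_scale)
  have Wsx: "W s x = exp (-(l * s)) * U s x" unfolding W_def by simp
  have eqD: "(exp (-(l * s)) * (-l)) * U s x + exp (-(l * s)) * (exp (l * s) * g s x + Pop h ap am U s x)
      = g s x + Pop h ap am W s x - l * W s x"
    unfolding popW Wsx using e by (simp add: algebra_simps)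
  show ?thesis unfolding eqD[symmetric] unfolding W_def by (rule d)
qed

lemma W_bd: "s \<in> {0..T} \<Longrightarrow> \<bar>W s x\<bar> \<le> Q + G * s"
proof -
  assume s: "s \<in> {0..T}"
  have "\<bar>W s x\<bar> = exp (-(l * s)) * \<bar>U s x\<bar>" unfolding W_def by (simp add: abs_mult)
  also have "\<dots> \<le> exp (-(l * s)) * (exp (l * s) * (Q + G * s))"
    using U_bound[OF s, of x] by (simp add: mult_left_mono)
  also have "\<dots> = Q + G * s" by (simp add: exp_add[symmetric] mult.assoc[symmetric])
  finally show ?thesis .
qed

lemma W_bd2: "s \<in> {0..T} \<Longrightarrow> \<bar>W s x\<bar> \<le> Cb"
proof -
  assume s: "s \<in> {0..T}"
  have "Q + G * s \<le> Cb" unfolding Cb_def using s G0 by (simp add: mult_left_mono)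
  then show ?thesis using W_bd[OF s, of x] by linarith
qed

lemma W_lipx: "s \<in> {0..T} \<Longrightarrow> \<bar>W s x - W s y\<bar> \<le> (Lq + Lx * T) * dist x y"
proof -
  assume s: "s \<in> {0..T}"
  have "\<bar>W s x - W s y\<bar> = exp (-(l * s)) * \<bar>U s x - U s y\<bar>" unfolding W_def
    by (simp add: abs_mult right_diff_distrib[symmetric])
  also have "\<dots> \<le> exp (-(l * s)) * (exp (l * s) * (Lq + Lx * s) * dist x y)"
    using U_lip[OF s, of x y] by (simp add: mult_left_mono)
  also have "\<dots> = (Lq + Lx * s) * dist x y" by (simp add: exp_add[symmetric] mult.assoc[symmetric])
  also have "\<dots> \<le> (Lq + Lx * T) * dist x y"
    using s Lx0 by (intro mult_right_mono add_left_mono mult_left_mono) auto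
  finally show ?thesis .
qed

lemma W_dbd: "s \<in> {0..T} \<Longrightarrow> \<bar>g s x + Pop h ap am W s x - l * W s x\<bar> \<le> G + 2 * l * Cb"
proof -
  assume s: "s \<in> {0..T}"
  have p: "\<bar>Pop h ap am W s x\<bar> \<le> l * Cb"
    by (rule Pop_bound) (use s apn amn sumeq W_bd2 in auto)
  have w: "\<bar>l * W s x\<bar> \<le> l * Cb" using W_bd2[OF s, of x] l0 by (simp add: abs_mult mult_left_mono)
  show ?thesis using p w gb[OF s, of x] by linarith
qed

lemma W_lipt: "s \<in> {0..T} \<Longrightarrow> s' \<in> {0..T} \<Longrightarrow> \<bar>W s x - W s' x\<bar> \<le> (G + 2 * l * Cb) * \<bar>s - s'\<bar>"
proof -
  have main: "\<bar>W b x - W a x\<bar> \<le> (G + 2 * l * Cb) * (b - a)" if ab: "a \<le> b" "a \<in> {0..T}" "b \<in> {0..T}" for a b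
  proof (rule cmp_deriv[where F="\<lambda>r. W r x - W a x" and F'="\<lambda>r. g r x + Pop h ap am W r x - l * W r x"
        and R="\<lambda>r. (G + 2 * l * Cb) * (r - a)" and R'="\<lambda>r. G + 2 * l * Cb", OF ab(1)])
    fix r assume r: "r \<in> {a..b}"
    hence rT: "r \<in> {0..T}" using ab by auto
    have "((\<lambda>r. W r x) has_real_derivative g r x + Pop h ap am W r x - l * W r x) (at r within {a..b})"
      by (rule DERIV_subset[OF W_deriv[OF rT]]) (use ab in auto)
    from DERIV_diff[OF this DERIV_const[of "W a x"]]
    show "((\<lambda>r. W r x - W a x) has_real_derivative g r x + Pop h ap am W r x - l * W r x) (at r within {a..b})"
      by simp
    show "((\<lambda>r. (G + 2 * l * Cb) * (r - a)) has_real_derivative G + 2 * l * Cb) (at r within {a..b})"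
      by (auto intro!: derivative_eq_intros)
    show "\<bar>g r x + Pop h ap am W r x - l * W r x\<bar> \<le> G + 2 * l * Cb" by (rule W_dbd[OF rT])
  qed simp
  assume s: "s \<in> {0..T}" and s': "s' \<in> {0..T}"
  show ?thesis
  proof (cases "s' \<le> s")
    case True then show ?thesis using main[OF True s' s] by simp
  next
    case False then show ?thesis using main[of s s'] s s' by (simp add: abs_minus_commute)
  qed
qed

lemma W_lip: "(G + 2 * l * Cb + (Lq + Lx * T))-lipschitz_on ({0..T} \<times> UNIV) (\<lambda>(s,x). W s x)"
proof (rule lipschitz_onI)
  show "0 \<le> G + 2 * l * Cb + (Lq + Lx * T)" using G0 l0 Cb0 Lq0 Lx0 T0 by simp
  fix p1 p2 :: "real \<times> (real^'d)" assume p: "p1 \<in> {0..T} \<times> UNIV" "p2 \<in> {0..T} \<times> UNIV"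
  obtain s x s' y where pp: "p1 = (s, x)" "p2 = (s', y)" by force
  have s: "s \<in> {0..T}" "s' \<in> {0..T}" using p pp by auto
  have "\<bar>s - s'\<bar> \<le> dist p1 p2" using dist_fst_le[of p1 p2] pp by (simp add: dist_real_def)
  moreover have "dist x y \<le> dist p1 p2" using dist_snd_le[of p1 p2] pp by simp
  ultimately have 1: "(G + 2 * l * Cb) * \<bar>s - s'\<bar> + (Lq + Lx * T) * dist x y \<le> (G + 2 * l * Cb + (Lq + Lx * T)) * dist p1 p2"
    using G0 l0 Cb0 Lq0 Lx0 T0 by (simp add: distrib_right add_mono mult_left_mono)
  have "\<bar>W s x - W s' y\<bar> \<le> \<bar>W s x - W s' x\<bar> + \<bar>W s' x - W s' y\<bar>" by linarith
  also have "\<dots> \<le> (G + 2 * l * Cb) * \<bar>s - s'\<bar> + (Lq + Lx * T) * dist x y"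
    using W_lipt[OF s, of x] W_lipx[OF s(2), of x y] by linarith
  finally show "dist ((\<lambda>(s,x). W s x) p1) ((\<lambda>(s,x). W s x) p2) \<le> (G + 2 * l * Cb + (Lq + Lx * T)) * dist p1 p2"
    using 1 pp by (simp add: dist_real_def)
qed

lemma ode_solve:
  "\<exists>w. (\<forall>x. w 0 x = q x) \<and>
     (\<forall>s\<in>{0..T}. \<forall>x. ((\<lambda>s. w s x) has_real_derivative (g s x + Pop h ap am w s x - l * w s x)) (at s within {0..T})) \<and>
     (\<forall>s\<in>{0..T}. \<forall>x. \<bar>w s x\<bar> \<le> Q + G * T) \<and>
     (\<exists>K. K-lipschitz_on ({0..T} \<times> UNIV) (\<lambda>(s,x). w s x))"
  using W0 W_deriv W_bd2 W_lip unfolding Cb_def by blast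

end



lemma sqrt_tri: "sqrt (A^2 + (sqrt (B^2 + C^2))^2) \<le> sqrt (A^2 + B^2) + (C::real)" if "0 \<le> C"
proof -
  have "sqrt (A^2 + (sqrt (B^2 + C^2))^2) = sqrt ((A^2 + B^2) + C^2)" by (simp add: add.assoc)
  also have "\<dots> \<le> sqrt ((sqrt (A^2 + B^2) + C)^2)"
  proof (rule real_sqrt_le_mono)
    have "0 \<le> sqrt (A^2 + B^2) * C" using that by simp
    then show "A^2 + B^2 + C^2 \<le> (sqrt (A^2 + B^2) + C)^2"
      by (simp add: power2_eq_square algebra_simps)
  qed
  also have "\<dots> = sqrt (A^2 + B^2) + C" using that by simp
  finally show ?thesis .
qed

lemma dist3: "dist (t, (x, a)) (t', (y, b)) \<le> dist (t, x) (t', y) + dist a b"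
  unfolding dist_Pair_Pair by (rule sqrt_tri) simp

lemma lip_comp:
  fixes F :: "real \<Rightarrow> 'x::metric_space \<Rightarrow> 'a::metric_space \<Rightarrow> 'b::metric_space"
  assumes F: "KF-lipschitz_on (S \<times> UNIV \<times> A) (\<lambda>(t,x,a). F t x a)"
    and al: "Ka-lipschitz_on (S \<times> UNIV) (\<lambda>(t,x). al t x)"
    and inA: "\<And>t x. t \<in> S \<Longrightarrow> al t x \<in> A"
  shows "(KF * (1 + Ka))-lipschitz_on (S \<times> UNIV) (\<lambda>(t,x). F t x (al t x))"
proof (rule lipschitz_onI)
  have KF: "0 \<le> KF" using lipschitz_on_nonneg[OF F] .
  have Ka: "0 \<le> Ka" using lipschitz_on_nonneg[OF al] .
  show "0 \<le> KF * (1 + Ka)" using KF Ka by simp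
  fix p1 p2 :: "real \<times> 'x" assume p: "p1 \<in> S \<times> UNIV" "p2 \<in> S \<times> UNIV"
  obtain t x t' y where pp: "p1 = (t, x)" "p2 = (t', y)" by force
  have tS: "t \<in> S" "t' \<in> S" using p pp by auto
  have "dist (F t x (al t x)) (F t' y (al t' y)) \<le> KF * dist (t, (x, al t x)) (t', (y, al t' y))"
    using lipschitz_onD[OF F, of "(t, x, al t x)" "(t', y, al t' y)"] tS inA by auto
  also have "\<dots> \<le> KF * (dist (t, x) (t', y) + dist (al t x) (al t' y))"
    by (rule mult_left_mono[OF dist3 KF])
  also have "\<dots> \<le> KF * (dist (t, x) (t', y) + Ka * dist (t, x) (t', y))"
    using lipschitz_onD[OF al, of "(t, x)" "(t', y)"] tS KF by (auto intro!: mult_left_mono)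
  also have "\<dots> = KF * (1 + Ka) * dist p1 p2" using pp by (simp add: algebra_simps)
  finally show "dist ((\<lambda>(t,x). F t x (al t x)) p1) ((\<lambda>(t,x). F t x (al t x)) p2) \<le> KF * (1 + Ka) * dist p1 p2"
    using pp by simp
qed

lemma lip_slice:
  fixes H :: "real \<times> 'x::metric_space \<Rightarrow> real"
  assumes H: "K-lipschitz_on ({0..T} \<times> UNIV) H"
  shows "continuous_on {0..T} (\<lambda>r. H (T - r, x))"
    and "r \<in> {0..T} \<Longrightarrow> \<bar>H (T - r, x) - H (T - r, y)\<bar> \<le> K * dist x y"
proof -
  have c: "continuous_on ({0..T} \<times> UNIV) H" by (rule lipschitz_on_continuous_on[OF H])
  show "continuous_on {0..T} (\<lambda>r. H (T - r, x))"
    by (rule continuous_on_compose2[OF c, of "{0..T}" "\<lambda>r. (T - r, x)"]) (auto intro!: continuous_intros)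
  assume r: "r \<in> {0..T}"
  show "\<bar>H (T - r, x) - H (T - r, y)\<bar> \<le> K * dist x y"
    using lipschitz_onD[OF H, of "(T - r, x)" "(T - r, y)"] r by (simp add: dist_real_def dist_Pair_Pair)
qed

lemma lip_comp_i:
  fixes H :: "'p::metric_space \<Rightarrow> real^'d"
  assumes "K-lipschitz_on S H"
  shows "K-lipschitz_on S (\<lambda>p. H p $ i)"
proof (rule lipschitz_onI)
  show "0 \<le> K" using lipschitz_on_nonneg[OF assms] .
  fix x y assume "x \<in> S" "y \<in> S"
  then have "dist (H x) (H y) \<le> K * dist x y" by (rule lipschitz_onD[OF assms])
  moreover have "dist (H x $ i) (H y $ i) \<le> dist (H x) (H y)" by (rule dist_vec_nth_le)
  ultimately show "dist (H x $ i) (H y $ i) \<le> K * dist x y" by linarith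
qed

lemma eq_alg:
  fixes u :: "real^'d \<Rightarrow> real" and F :: "real^'d" and ap am :: "'d \<Rightarrow> real"
  assumes h: "0 < h" and ap: "\<And>i. ap i = N / h + F $ i / (2 * h)" and am: "\<And>i. am i = N / h - F $ i / (2 * h)"
  shows "- (G0 + (\<Sum>i\<in>UNIV. ap i * u (x + h *\<^sub>R axis i 1) + am i * u (x - h *\<^sub>R axis i 1))
           - (2 * real CARD('d) * N / h) * u x) + G0 + grad_h h u x \<bullet> F = - N * h * lap_h h u x"
proof -
  define up where "up i = u (x + h *\<^sub>R axis i 1)" for i
  define um where "um i = u (x - h *\<^sub>R axis i 1)" for i
  have 1: "(2 * real CARD('d) * N / h) * u x = (\<Sum>i\<in>(UNIV::'d set). 2 * N / h * u x)" by simp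
  have 2: "grad_h h u x \<bullet> F = (\<Sum>i\<in>UNIV. (up i - um i) / (2 * h) * F $ i)"
    by (simp add: grad_h_def inner_vec_def up_def um_def)
  have 3: "N * h * lap_h h u x = (\<Sum>i\<in>UNIV. N * h * ((up i - 2 * u x + um i) / h\<^sup>2))"
    by (simp add: lap_h_def sum_distrib_left up_def um_def)
  have key: "- (ap i * up i + am i * um i) + 2 * N / h * u x + (up i - um i) / (2 * h) * F $ i
      + N * h * ((up i - 2 * u x + um i) / h\<^sup>2) = 0" for i
    using h by (simp add: ap am field_simps power2_eq_square)
  have "(\<Sum>i\<in>UNIV. - (ap i * up i + am i * um i) + 2 * N / h * u x + (up i - um i) / (2 * h) * F $ i
      + N * h * ((up i - 2 * u x + um i) / h\<^sup>2)) = 0" by (simp only: key sum.neutral_const)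
  then have "- (\<Sum>i\<in>UNIV. ap i * up i + am i * um i) + (\<Sum>i\<in>(UNIV::'d set). 2 * N / h * u x)
      + (\<Sum>i\<in>UNIV. (up i - um i) / (2 * h) * F $ i) + (\<Sum>i\<in>UNIV. N * h * ((up i - 2 * u x + um i) / h\<^sup>2)) = 0"
    by (simp only: sum.distrib sum_negf)
  then show ?thesis unfolding 2 using 1 3 unfolding up_def um_def by linarith
qed

lemma step_lemma:
  fixes T N h Qb Gb Kc Kf Kq Ka :: real
    and A :: "(real^'m) set"
    and c :: "real \<Rightarrow> real^'d \<Rightarrow> real^'m \<Rightarrow> real"
    and f :: "real \<Rightarrow> real^'d \<Rightarrow> real^'m \<Rightarrow> real^'d"
    and q :: "real^'d \<Rightarrow> real"
    and al :: "real \<Rightarrow> real^'d \<Rightarrow> real^'m"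
  assumes T: "0 \<le> T" and h: "0 < h" and N: "0 \<le> N"
    and c_lip: "Kc-lipschitz_on ({0..T} \<times> UNIV \<times> A) (\<lambda>(t,x,a). c t x a)"
    and f_lip: "Kf-lipschitz_on ({0..T} \<times> UNIV \<times> A) (\<lambda>(t,x,a). f t x a)"
    and cb: "\<And>t x a. t \<in> {0..T} \<Longrightarrow> a \<in> A \<Longrightarrow> \<bar>c t x a\<bar> \<le> Gb"
    and fb: "\<And>t x a. t \<in> {0..T} \<Longrightarrow> a \<in> A \<Longrightarrow> norm (f t x a) \<le> 2 * N"
    and qb: "\<And>x. \<bar>q x\<bar> \<le> Qb"
    and q_lip: "Kq-lipschitz_on UNIV q"
    and alA: "\<And>t x. t \<in> {0..T} \<Longrightarrow> al t x \<in> A"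
    and al_lip: "Ka-lipschitz_on ({0..T} \<times> UNIV) (\<lambda>(t,x). al t x)"
  shows "\<exists>v. (\<exists>K. K-lipschitz_on ({0..T} \<times> UNIV) (\<lambda>(t,x). v t x)) \<and> (\<forall>x. v T x = q x) \<and>
      (\<forall>t\<in>{0<..<T}. \<forall>x. \<exists>D. ((\<lambda>s. v s x) has_real_derivative D) (at t) \<and>
          D + c t x (al t x) + grad_h h (v t) x \<bullet> f t x (al t x) = - N * h * lap_h h (v t) x) \<and>
      (\<forall>t\<in>{0..T}. \<forall>x. \<bar>v t x\<bar> \<le> Qb + Gb * T)"
proof -
  define Hc where "Hc = (\<lambda>(t,x). c t x (al t x))"
  define Hf where "Hf i = (\<lambda>p. (\<lambda>(t,x). f t x (al t x)) p $ i)" for i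
  have Hc_lip: "(Kc * (1 + Ka))-lipschitz_on ({0..T} \<times> UNIV) Hc"
    unfolding Hc_def by (rule lip_comp[OF c_lip al_lip alA])
  have Hf_lip: "(Kf * (1 + Ka))-lipschitz_on ({0..T} \<times> UNIV) (Hf i)" for i
    unfolding Hf_def by (rule lip_comp_i[OF lip_comp[OF f_lip al_lip alA]])
  define l where "l = 2 * real CARD('d) * N / h"
  define g where "g r x = Hc (T - r, x)" for r x
  define ap where "ap r i x = N / h + Hf i (T - r, x) / (2 * h)" for r i x
  define am where "am r i x = N / h - Hf i (T - r, x) / (2 * h)" for r i x
  have Hfb: "\<bar>Hf i (T - r, x)\<bar> \<le> 2 * N" if r: "r \<in> {0..T}" for r i x
  proof -
    have "\<bar>Hf i (T - r, x)\<bar> \<le> norm (f (T - r) x (al (T - r) x))"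
      unfolding Hf_def by (simp add: component_le_norm_cart)
    also have "\<dots> \<le> 2 * N" using fb alA r by auto
    finally show ?thesis .
  qed
  have l0: "0 \<le> l" unfolding l_def using N h by simp
  have ql: "\<bar>q x - q y\<bar> \<le> Kq * dist x y" for x y
    using lipschitz_onD[OF q_lip, of x y] by (simp add: dist_real_def)
  have Lq0: "0 \<le> Kq" by (rule lipschitz_on_nonneg[OF q_lip])
  have gc: "continuous_on {0..T} (\<lambda>r. g r x)" for x
    unfolding g_def by (rule lip_slice(1)[OF Hc_lip])
  have gb: "\<bar>g r x\<bar> \<le> Gb" if "r \<in> {0..T}" for r x
    unfolding g_def Hc_def using cb alA that by auto
  have gl: "\<bar>g r x - g r y\<bar> \<le> (Kc * (1 + Ka)) * dist x y" if "r \<in> {0..T}" for r x y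
    unfolding g_def by (rule lip_slice(2)[OF Hc_lip that])
  have Lg0: "0 \<le> Kc * (1 + Ka)" by (rule lipschitz_on_nonneg[OF Hc_lip])
  have apc: "continuous_on {0..T} (\<lambda>r. ap r i x)" for i x
    unfolding ap_def using h by (intro continuous_intros lip_slice(1)[OF Hf_lip]) auto
  have amc: "continuous_on {0..T} (\<lambda>r. am r i x)" for i x
    unfolding am_def using h by (intro continuous_intros lip_slice(1)[OF Hf_lip]) auto
  have apn: "0 \<le> ap r i x" if "r \<in> {0..T}" for r i x
  proof -
    have "0 \<le> (2 * N + Hf i (T - r, x)) / (2 * h)" using Hfb[OF that, of i x] h by (intro divide_nonneg_pos) auto
    moreover have "ap r i x = (2 * N + Hf i (T - r, x)) / (2 * h)" unfolding ap_def using h by (simp add: field_simps)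
    ultimately show ?thesis by simp
  qed
  have amn: "0 \<le> am r i x" if "r \<in> {0..T}" for r i x
  proof -
    have "0 \<le> (2 * N - Hf i (T - r, x)) / (2 * h)" using Hfb[OF that, of i x] h by (intro divide_nonneg_pos) auto
    moreover have "am r i x = (2 * N - Hf i (T - r, x)) / (2 * h)" unfolding am_def using h by (simp add: field_simps)
    ultimately show ?thesis by simp
  qed
  have sumeq: "(\<Sum>i\<in>UNIV. ap r i x + am r i x) = l" for r x
    unfolding ap_def am_def l_def by (simp add: field_simps)
  have apl: "\<bar>ap r i x - ap r i y\<bar> \<le> (Kf * (1 + Ka) / (2 * h)) * dist x y" if "r \<in> {0..T}" for r i x y
  proof -
    have "\<bar>ap r i x - ap r i y\<bar> = \<bar>Hf i (T - r, x) - Hf i (T - r, y)\<bar> / (2 * h)"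
      unfolding ap_def using h by (simp add: diff_divide_distrib[symmetric] abs_divide)
    also have "\<dots> \<le> (Kf * (1 + Ka)) * dist x y / (2 * h)"
      using lip_slice(2)[OF Hf_lip that] h by (simp add: divide_right_mono)
    finally show ?thesis by simp
  qed
  have aml: "\<bar>am r i x - am r i y\<bar> \<le> (Kf * (1 + Ka) / (2 * h)) * dist x y" if "r \<in> {0..T}" for r i x y
  proof -
    have "\<bar>am r i x - am r i y\<bar> = \<bar>Hf i (T - r, x) - Hf i (T - r, y)\<bar> / (2 * h)"
      unfolding am_def using h by (simp add: diff_divide_distrib[symmetric] abs_divide abs_minus_commute)
    also have "\<dots> \<le> (Kf * (1 + Ka)) * dist x y / (2 * h)"
      using lip_slice(2)[OF Hf_lip that] h by (simp add: divide_right_mono)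
    finally show ?thesis by simp
  qed
  have La0: "0 \<le> Kf * (1 + Ka) / (2 * h)" using lipschitz_on_nonneg[OF Hf_lip] h by simp
  obtain w where w0: "\<And>x. w 0 x = q x"
    and wd: "\<And>s x. s \<in> {0..T} \<Longrightarrow> ((\<lambda>s. w s x) has_real_derivative (g s x + Pop h ap am w s x - l * w s x)) (at s within {0..T})"
    and wb: "\<And>s x. s \<in> {0..T} \<Longrightarrow> \<bar>w s x\<bar> \<le> Qb + Gb * T"
    and wl: "\<exists>K. K-lipschitz_on ({0..T} \<times> UNIV) (\<lambda>(s,x). w s x)"
    using ode_solve[OF T l0 qb ql Lq0 gc gb gl Lg0 apc amc apn amn sumeq apl aml La0] by blast
  define v where "v t x = w (T - t) x" for t x
  show ?thesis
  proof (intro exI[of _ v] conjI allI ballI)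
    obtain K where K: "K-lipschitz_on ({0..T} \<times> UNIV) (\<lambda>(s,x). w s x)" using wl by blast
    show "\<exists>K. K-lipschitz_on ({0..T} \<times> UNIV) (\<lambda>(t,x). v t x)"
    proof (rule exI[of _ K], rule lipschitz_onI)
      show "0 \<le> K" by (rule lipschitz_on_nonneg[OF K])
      fix p1 p2 :: "real \<times> (real^'d)" assume p: "p1 \<in> {0..T} \<times> UNIV" "p2 \<in> {0..T} \<times> UNIV"
      obtain t x t' y where pp: "p1 = (t, x)" "p2 = (t', y)" by force
      have "dist (w (T - t) x) (w (T - t') y) \<le> K * dist (T - t, x) (T - t', y)"
        using lipschitz_onD[OF K, of "(T - t, x)" "(T - t', y)"] p pp by auto
      also have "dist (T - t, x) (T - t', y) = dist p1 p2"
        using pp by (simp add: dist_Pair_Pair dist_real_def abs_minus_commute)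
      finally show "dist ((\<lambda>(t,x). v t x) p1) ((\<lambda>(t,x). v t x) p2) \<le> K * dist p1 p2"
        using pp by (simp add: v_def)
    qed
  next
    fix x show "v T x = q x" unfolding v_def using w0 by simp
  next
    fix t x assume t: "t \<in> {0<..<T}"
    have s: "T - t \<in> {0..T}" "0 < T - t" "T - t < T" using t by auto
    have dW: "((\<lambda>s. w s x) has_real_derivative (g (T - t) x + Pop h ap am w (T - t) x - l * w (T - t) x)) (at (T - t))"
      using wd[OF s(1), of x] s by (simp add: at_within_Icc_at)
    have dT: "((\<lambda>t. T - t) has_real_derivative -1) (at t)" by (auto intro!: derivative_eq_intros)
    have dv: "((\<lambda>s. v s x) has_real_derivative (g (T - t) x + Pop h ap am w (T - t) x - l * w (T - t) x) * -1) (at t)"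
      unfolding v_def using DERIV_chain2[OF dW dT] .
    have e: "- (c t x (al t x) + (\<Sum>i\<in>UNIV. ap (T - t) i x * w (T - t) (x + h *\<^sub>R axis i 1) + am (T - t) i x * w (T - t) (x - h *\<^sub>R axis i 1))
           - (2 * real CARD('d) * N / h) * w (T - t) x) + c t x (al t x) + grad_h h (w (T - t)) x \<bullet> f t x (al t x)
        = - N * h * lap_h h (w (T - t)) x"
      by (rule eq_alg[OF h]) (simp_all add: ap_def am_def Hf_def)
    have vt: "v t = w (T - t)" unfolding v_def by (rule ext) simp
    show "\<exists>D. ((\<lambda>s. v s x) has_real_derivative D) (at t) \<and>
          D + c t x (al t x) + grad_h h (v t) x \<bullet> f t x (al t x) = - N * h * lap_h h (v t) x"
    proof (intro exI conjI)
      show "((\<lambda>s. v s x) has_real_derivative (g (T - t) x + Pop h ap am w (T - t) x - l * w (T - t) x) * -1) (at t)"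
        by (rule dv)
      show "(g (T - t) x + Pop h ap am w (T - t) x - l * w (T - t) x) * -1 + c t x (al t x)
          + grad_h h (v t) x \<bullet> f t x (al t x) = - N * h * lap_h h (v t) x"
        unfolding vt using e by (simp add: g_def Hc_def Pop_def l_def)
    qed
  next
    fix t x assume "t \<in> {0..T}"
    then show "\<bar>v t x\<bar> \<le> Qb + Gb * T" unfolding v_def using wb by simp
  qed
qed



lemma next_good:
  fixes alpha :: "real \<Rightarrow> real^'d \<Rightarrow> real^'d \<Rightarrow> real^'m" and v :: "real \<Rightarrow> real^'d \<Rightarrow> real"
  assumes h: "0 < h" and alip: "Kal-lipschitz_on ({0..T} \<times> UNIV \<times> UNIV) (\<lambda>(t,x,p). alpha t x p)"
    and vlip: "Kv-lipschitz_on ({0..T} \<times> UNIV) (\<lambda>(t,x). v t x)"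
  shows "\<exists>K. K-lipschitz_on ({0..T} \<times> UNIV) (\<lambda>(t,x). alpha t x (grad_h h (v t) x))"
proof -
  have Kv: "0 \<le> Kv" by (rule lipschitz_on_nonneg[OF vlip])
  have vl: "\<bar>v t a - v t' b\<bar> \<le> Kv * dist (t, a) (t', b)" if "t \<in> {0..T}" "t' \<in> {0..T}" for t t' a b
    using lipschitz_onD[OF vlip, of "(t, a)" "(t', b)"] that by (simp add: dist_real_def)
  have gl: "(real CARD('d) * Kv / h)-lipschitz_on ({0..T} \<times> UNIV) (\<lambda>(t,x). grad_h h (v t) x)"
  proof (rule lipschitz_onI)
    show "0 \<le> real CARD('d) * Kv / h" using Kv h by simp
    fix p1 p2 :: "real \<times> (real^'d)" assume p: "p1 \<in> {0..T} \<times> UNIV" "p2 \<in> {0..T} \<times> UNIV"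
    obtain t x t' y where pp: "p1 = (t, x)" "p2 = (t', y)" by force
    have tt: "t \<in> {0..T}" "t' \<in> {0..T}" using p pp by auto
    let ?d = "dist (t, x) (t', y)"
    have comp: "\<bar>(grad_h h (v t) x - grad_h h (v t') y) $ i\<bar> \<le> Kv * ?d / h" for i
    proof -
      have e1: "dist (t, x + h *\<^sub>R axis i 1) (t', y + h *\<^sub>R axis i 1) = ?d"
        by (simp add: dist_Pair_Pair)
      have e2: "dist (t, x - h *\<^sub>R axis i 1) (t', y - h *\<^sub>R axis i 1) = ?d"
        by (simp add: dist_Pair_Pair dist_norm)
      have a1: "\<bar>v t (x + h *\<^sub>R axis i 1) - v t' (y + h *\<^sub>R axis i 1)\<bar> \<le> Kv * ?d"
        using vl[OF tt] e1 by metis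
      have a2: "\<bar>v t (x - h *\<^sub>R axis i 1) - v t' (y - h *\<^sub>R axis i 1)\<bar> \<le> Kv * ?d"
        using vl[OF tt] e2 by metis
      have "(grad_h h (v t) x - grad_h h (v t') y) $ i =
          ((v t (x + h *\<^sub>R axis i 1) - v t' (y + h *\<^sub>R axis i 1)) - (v t (x - h *\<^sub>R axis i 1) - v t' (y - h *\<^sub>R axis i 1))) / (2 * h)"
        by (simp add: grad_h_def diff_divide_distrib)
      also have "\<bar>\<dots>\<bar> \<le> (Kv * ?d + Kv * ?d) / (2 * h)"
      proof -
        let ?X = "v t (x + h *\<^sub>R axis i 1) - v t' (y + h *\<^sub>R axis i 1)"
        let ?Y = "v t (x - h *\<^sub>R axis i 1) - v t' (y - h *\<^sub>R axis i 1)"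
        have n: "\<bar>?X - ?Y\<bar> \<le> Kv * ?d + Kv * ?d" using a1 a2 abs_triangle_ineq4[of ?X ?Y] by linarith
        have "\<bar>?X - ?Y\<bar> / (2 * h) \<le> (Kv * ?d + Kv * ?d) / (2 * h)"
          by (rule divide_right_mono[OF n]) (use h in simp)
        then show ?thesis using h by (simp add: abs_divide)
      qed
      also have "\<dots> = Kv * ?d / h" using h by (simp add: field_simps)
      finally show ?thesis .
    qed
    have "dist (grad_h h (v t) x) (grad_h h (v t') y) \<le> (\<Sum>i\<in>UNIV. \<bar>(grad_h h (v t) x - grad_h h (v t') y) $ i\<bar>)"
      unfolding dist_norm by (rule norm_le_l1_cart)
    also have "\<dots> \<le> (\<Sum>i\<in>(UNIV::'d set). Kv * ?d / h)" by (rule sum_mono[OF comp])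
    also have "\<dots> = real CARD('d) * Kv / h * dist p1 p2" using pp by simp
    finally show "dist ((\<lambda>(t,x). grad_h h (v t) x) p1) ((\<lambda>(t,x). grad_h h (v t) x) p2) \<le> real CARD('d) * Kv / h * dist p1 p2"
      using pp by simp
  qed
  show ?thesis using lip_comp[OF alip gl] by blast
qed

theorem proposition2p2:
  fixes T N :: real
    and A :: "(real^'m) set"
    and c :: "real \<Rightarrow> real^'d \<Rightarrow> real^'m \<Rightarrow> real"
    and f :: "real \<Rightarrow> real^'d \<Rightarrow> real^'m \<Rightarrow> real^'d"
    and q :: "real^'d \<Rightarrow> real"
    and alpha :: "real \<Rightarrow> real^'d \<Rightarrow> real^'d \<Rightarrow> real^'m"
    and alpha0 :: "real \<Rightarrow> real^'d \<Rightarrow> real^'m"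
  assumes T: "T \<ge> 1"
    and A: "compact A"
    and c_bdd: "bounded ((\<lambda>(t,x,a). c t x a) ` ({0..T} \<times> UNIV \<times> A))"
    and c_lip: "\<exists>K. K-lipschitz_on ({0..T} \<times> UNIV \<times> A) (\<lambda>(t,x,a). c t x a)"
    and f_bdd: "bounded ((\<lambda>(t,x,a). f t x a) ` ({0..T} \<times> UNIV \<times> A))"
    and f_lip: "\<exists>K. K-lipschitz_on ({0..T} \<times> UNIV \<times> A) (\<lambda>(t,x,a). f t x a)"
    and q_bdd: "bounded (range q)"
    and q_lip: "\<exists>K. K-lipschitz_on UNIV q"
    and alpha_argmin: "\<And>t x p. t \<in> {0..T} \<Longrightarrow> alpha t x p \<in> A \<and>
        (\<forall>a\<in>A. a \<noteq> alpha t x p \<longrightarrow>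
           c t x (alpha t x p) + p \<bullet> f t x (alpha t x p) < c t x a + p \<bullet> f t x a)"
    and alpha_lip: "\<exists>K. K-lipschitz_on ({0..T} \<times> UNIV \<times> UNIV) (\<lambda>(t,x,p). alpha t x p)"
    and alpha0_cont: "continuous_on UNIV (\<lambda>(t,x). alpha0 t x)"
    and alpha0_A: "\<And>t x. alpha0 t x \<in> A"
    and alpha0_lip: "\<exists>K. K-lipschitz_on UNIV (\<lambda>(t,x). alpha0 t x)"
    and N: "N \<ge> max 1 (sup_norm T A f / 2)"
  shows "\<exists>C. \<forall>h \<in> {0<..<1}. \<exists>(v :: nat \<Rightarrow> real \<Rightarrow> real^'d \<Rightarrow> real)
                                  (\<alpha> :: nat \<Rightarrow> real \<Rightarrow> real^'d \<Rightarrow> real^'m).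
     \<alpha> 0 = alpha0 \<and>
     (\<forall>n. (\<exists>K. K-lipschitz_on ({0..T} \<times> UNIV) (\<lambda>(t,x). v n t x)) \<and>
          (\<exists>K. K-lipschitz_on ({0<..<T} \<times> UNIV) (\<lambda>(t,x). \<alpha> n t x)) \<and>
          (\<forall>t\<in>{0<..<T}. \<forall>x. \<alpha> n t x \<in> A) \<and>
          (\<forall>x. v n T x = q x) \<and>
          (\<forall>t\<in>{0<..<T}. \<forall>x. \<exists>D. ((\<lambda>s. v n s x) has_real_derivative D) (at t) \<and>
               D + c t x (\<alpha> n t x) + grad_h h (v n t) x \<bullet> f t x (\<alpha> n t x)
                 = - N * h * lap_h h (v n t) x) \<and>
          (\<forall>t\<in>{0<..<T}. \<forall>x. \<alpha> (Suc n) t x = alpha t x (grad_h h (v n t) x)) \<and>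
          (\<forall>t\<in>{0..T}. \<forall>x. \<bar>v n t x\<bar> \<le> C))"
proof -
  obtain Kc where Kc: "Kc-lipschitz_on ({0..T} \<times> UNIV \<times> A) (\<lambda>(t,x,a). c t x a)" using c_lip by blast
  obtain Kf where Kf: "Kf-lipschitz_on ({0..T} \<times> UNIV \<times> A) (\<lambda>(t,x,a). f t x a)" using f_lip by blast
  obtain Kq where Kq: "Kq-lipschitz_on UNIV q" using q_lip by blast
  obtain Kal where Kal: "Kal-lipschitz_on ({0..T} \<times> UNIV \<times> UNIV) (\<lambda>(t,x,p). alpha t x p)" using alpha_lip by blast
  obtain Ka0 where Ka0: "Ka0-lipschitz_on UNIV (\<lambda>(t,x). alpha0 t x)" using alpha0_lip by blast
  obtain Gb where Gb: "\<And>y. y \<in> (\<lambda>(t,x,a). c t x a) ` ({0..T} \<times> UNIV \<times> A) \<Longrightarrow> norm y \<le> Gb"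
    using c_bdd unfolding bounded_iff by blast
  have cb: "\<bar>c t x a\<bar> \<le> Gb" if "t \<in> {0..T}" "a \<in> A" for t x a
    using Gb[of "c t x a"] that by force
  obtain Qb where Qb: "\<And>y. y \<in> range q \<Longrightarrow> norm y \<le> Qb"
    using q_bdd unfolding bounded_iff by blast
  have qb: "\<bar>q x\<bar> \<le> Qb" for x using Qb[of "q x"] by simp
  obtain Fb where Fb: "\<And>y. y \<in> (\<lambda>(t,x,a). f t x a) ` ({0..T} \<times> UNIV \<times> A) \<Longrightarrow> norm y \<le> Fb"
    using f_bdd unfolding bounded_iff by blast
  have fb: "norm (f t x a) \<le> 2 * N" if "t \<in> {0..T}" "a \<in> A" for t x a
  proof -
    let ?S = "{0..T} \<times> (UNIV::(real^'d) set) \<times> A"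
    let ?F = "\<lambda>z. norm (f (fst z) (fst (snd z)) (snd (snd z)))"
    have bdd: "bdd_above (?F ` ?S)"
    proof (rule bdd_aboveI)
      fix y assume "y \<in> ?F ` ?S"
      then obtain t' x' a' where z: "t' \<in> {0..T}" "a' \<in> A" "y = norm (f t' x' a')" by auto
      have "f t' x' a' \<in> (\<lambda>(t,x,a). f t x a) ` ?S"
        by (rule rev_image_eqI[of "(t', x', a')"]) (use z in auto)
      then show "y \<le> Fb" using Fb z by simp
    qed
    have "norm (f t x a) = ?F (t, x, a)" by simp
    also have "\<dots> \<le> sup_norm T A f" unfolding sup_norm_def
      by (rule cSUP_upper[OF _ bdd]) (use that in auto)
    also have "\<dots> \<le> 2 * N" using N by simp
    finally show ?thesis .
  qed
  have T0: "0 \<le> T" using T by simp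
  have N0: "0 \<le> N" using N by simp
  show ?thesis
  proof (rule exI[of _ "Qb + Gb * T"], intro ballI)
    fix h :: real assume "h \<in> {0<..<1}"
    then have h: "0 < h" by simp
    define P where "P al v \<longleftrightarrow> (\<exists>K. K-lipschitz_on ({0..T} \<times> UNIV) (\<lambda>(t,x). v t x)) \<and> (\<forall>x. v T x = q x) \<and>
      (\<forall>t\<in>{0<..<T}. \<forall>x. \<exists>D. ((\<lambda>s. v s x) has_real_derivative D) (at t) \<and>
          D + c t x (al t x) + grad_h h (v t) x \<bullet> f t x (al t x) = - N * h * lap_h h (v t) x) \<and>
      (\<forall>t\<in>{0..T}. \<forall>x. \<bar>v t x\<bar> \<le> Qb + Gb * T)"
      for al :: "real \<Rightarrow> real^'d \<Rightarrow> real^'m" and v :: "real \<Rightarrow> real^'d \<Rightarrow> real"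
    define good where "good al \<longleftrightarrow> (\<forall>t\<in>{0..T}. \<forall>x. al t x \<in> A) \<and> (\<exists>K. K-lipschitz_on ({0..T} \<times> UNIV) (\<lambda>(t,x). al t x))"
      for al :: "real \<Rightarrow> real^'d \<Rightarrow> real^'m"
    have stp: "\<exists>v. P al v" if gal: "good al" for al
    proof -
      obtain Ka where Ka: "Ka-lipschitz_on ({0..T} \<times> UNIV) (\<lambda>(t,x). al t x)" using gal unfolding good_def by blast
      have alA: "\<And>t x. t \<in> {0..T} \<Longrightarrow> al t x \<in> A" using gal unfolding good_def by blast
      show ?thesis unfolding P_def
        by (rule step_lemma[OF T0 h N0 Kc Kf cb fb qb Kq alA Ka])
    qed
    define V where "V al = (SOME v. P al v)" for al
    have PV: "P al (V al)" if "good al" for al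
      unfolding V_def using stp[OF that] by (rule someI_ex)
    define aseq where "aseq = rec_nat alpha0 (\<lambda>_ a. \<lambda>t x. alpha t x (grad_h h (V a t) x))"
    have aseq0: "aseq 0 = alpha0" unfolding aseq_def by simp
    have aseqS: "aseq (Suc n) = (\<lambda>t x. alpha t x (grad_h h (V (aseq n) t) x))" for n
      unfolding aseq_def by simp
    have gd: "good (aseq n)" for n
    proof (induction n)
      case 0
      have "Ka0-lipschitz_on ({0..T} \<times> UNIV) (\<lambda>(t,x). alpha0 t x)"
        by (rule lipschitz_on_subset[OF Ka0]) simp
      then show ?case unfolding good_def aseq0 using alpha0_A by blast
    next
      case (Suc n)
      from PV[OF Suc.IH] obtain Kv where Kv: "Kv-lipschitz_on ({0..T} \<times> UNIV) (\<lambda>(t,x). V (aseq n) t x)"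
        unfolding P_def by blast
      have "\<exists>K. K-lipschitz_on ({0..T} \<times> UNIV) (\<lambda>(t,x). alpha t x (grad_h h (V (aseq n) t) x))"
        by (rule next_good[OF h Kal Kv])
      moreover have "\<forall>t\<in>{0..T}. \<forall>x. alpha t x (grad_h h (V (aseq n) t) x) \<in> A"
        using alpha_argmin by blast
      ultimately show ?case unfolding good_def aseqS by simp
    qed
    show "\<exists>(v :: nat \<Rightarrow> real \<Rightarrow> real^'d \<Rightarrow> real) (\<alpha> :: nat \<Rightarrow> real \<Rightarrow> real^'d \<Rightarrow> real^'m).
     \<alpha> 0 = alpha0 \<and>
     (\<forall>n. (\<exists>K. K-lipschitz_on ({0..T} \<times> UNIV) (\<lambda>(t,x). v n t x)) \<and>
          (\<exists>K. K-lipschitz_on ({0<..<T} \<times> UNIV) (\<lambda>(t,x). \<alpha> n t x)) \<and>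
          (\<forall>t\<in>{0<..<T}. \<forall>x. \<alpha> n t x \<in> A) \<and>
          (\<forall>x. v n T x = q x) \<and>
          (\<forall>t\<in>{0<..<T}. \<forall>x. \<exists>D. ((\<lambda>s. v n s x) has_real_derivative D) (at t) \<and>
               D + c t x (\<alpha> n t x) + grad_h h (v n t) x \<bullet> f t x (\<alpha> n t x)
                 = - N * h * lap_h h (v n t) x) \<and>
          (\<forall>t\<in>{0<..<T}. \<forall>x. \<alpha> (Suc n) t x = alpha t x (grad_h h (v n t) x)) \<and>
          (\<forall>t\<in>{0..T}. \<forall>x. \<bar>v n t x\<bar> \<le> Qb + Gb * T))"
    proof (intro exI[of _ "\<lambda>n. V (aseq n)"] exI[of _ aseq] conjI allI)
      show "aseq 0 = alpha0" by (rule aseq0)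
      fix n
      have P: "P (aseq n) (V (aseq n))" by (rule PV[OF gd])
      have G: "good (aseq n)" by (rule gd)
      show "\<exists>K. K-lipschitz_on ({0..T} \<times> UNIV) (\<lambda>(t,x). V (aseq n) t x)" using P unfolding P_def by blast
      show "\<exists>K. K-lipschitz_on ({0<..<T} \<times> UNIV) (\<lambda>(t,x). aseq n t x)"
      proof -
        obtain K where "K-lipschitz_on ({0..T} \<times> UNIV) (\<lambda>(t,x). aseq n t x)" using G unfolding good_def by blast
        then have "K-lipschitz_on ({0<..<T} \<times> UNIV) (\<lambda>(t,x). aseq n t x)"
          by (rule lipschitz_on_subset) auto
        then show ?thesis by blast
      qed
      show "\<forall>t\<in>{0<..<T}. \<forall>x. aseq n t x \<in> A" using G unfolding good_def by auto
      show "V (aseq n) T x = q x" for x using P unfolding P_def by blast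
      show "\<forall>t\<in>{0<..<T}. \<forall>x. \<exists>D. ((\<lambda>s. V (aseq n) s x) has_real_derivative D) (at t) \<and>
               D + c t x (aseq n t x) + grad_h h (V (aseq n) t) x \<bullet> f t x (aseq n t x)
                 = - N * h * lap_h h (V (aseq n) t) x" using P unfolding P_def by blast
      show "\<forall>t\<in>{0<..<T}. \<forall>x. aseq (Suc n) t x = alpha t x (grad_h h (V (aseq n) t) x)"
        by (simp add: aseqS)
      show "\<forall>t\<in>{0..T}. \<forall>x. \<bar>V (aseq n) t x\<bar> \<le> Qb + Gb * T" using P unfolding P_def by blast
    qed
  qed
qed

end
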